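(* Let $n \ge 1$ and $t$ be integers with $1 \le t < \frac{n+1}{2}$. Then the colorless cross-blockchain transaction task $(\mathcal{I}, \mathcal{O}', \Xi)$ on $n+1$ blockchains, defined in the context, has no $t$-resilient protocol in the asynchronous message-passing model with crash failures.
   Context: Setting. There are $n+1$ distinct blockchains $C_0,\dots,C_n$. An $(n+1)$-party cross-blockchain transaction touches exactly one block $v_i$ on each blockchain $C_i$. Input complex $\mathcal{I}$. The vertices are the pairs $(v_i, a)$ with $0 \le i \le n$ and $a \in \{0,1,\bot\}$. Here $0$ means not committed, $1$ means committed, and $\bot$ means the block's branch was suspended by a fork. A nonempty set of vertices is a simplex if and only if its vertices involve pairwise distinct blocks. Colorless output complex $\mathcal{O}'$. Its vertices are the values $0$ (aborted) and $1$ (committed), and its only simplices are $\{0\}$ and $\{1\}$. Colorless carrier map $\Xi$. For a simplex $\sigma$ of $\mathcal{I}$: - $\Xi(\sigma)=\{1\}$ if all input values in $\sigma$ are $1$; - $\Xi(\sigma)=\{0\}$ if some input value in $\sigma$ is $\bot$; - $\Xi(\sigma)=\mathcal{O}'$ otherwise. Computational model. There are $n+1$ processes (one per blockchain) communicating by asynchronous message passing, and at most $t$ of them may fail by crashing. Process $i$ starts with an input vertex $(v_i, a_i)$ of $\mathcal{I}$. A protocol solves the colorless task if, for every execution with at most $t$ crashes, every non-crashed process eventually decides a value in $\{0,1\}$. Moreover, if $\sigma$ is the simplex of inputs of the participating processes, the set of decided values must be a simplex of $\Xi(\sigma)$; in particular all decided values must be equal. Such a protocol is called $t$-resilient. *)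

theory Defs
  imports Main
begin

text \<open>Input values: 0 (not committed), 1 (committed), Bot (branch suspended by a fork).\<close>
datatype inval = Zero | One | Bot

text \<open>Blocks: process / blockchain i touches block v i (v injective on {0..n}).
  Vertices of the input complex are pairs (block, value).\<close>
definition in_vertices :: "nat \<Rightarrow> (nat \<Rightarrow> 'b) \<Rightarrow> ('b \<times> inval) set" where
  "in_vertices n v = {(v i, a) | i a. i \<le> n}"

definition input_complex :: "nat \<Rightarrow> (nat \<Rightarrow> 'b) \<Rightarrow> ('b \<times> inval) set set" where
  "input_complex n v = {\<sigma>. \<sigma> \<noteq> {} \<and> \<sigma> \<subseteq> in_vertices n v \<and>
       (\<forall>x\<in>\<sigma>. \<forall>y\<in>\<sigma>. fst x = fst y \<longrightarrow> x = y)}"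

text \<open>Colorless output complex O': vertices 0 (aborted), 1 (committed); simplices {0},{1}.\<close>
definition out_complex :: "nat set set" where
  "out_complex = {{0}, {1}}"

definition Xi :: "('b \<times> inval) set \<Rightarrow> nat set set" where
  "Xi \<sigma> = (if (\<forall>x\<in>\<sigma>. snd x = One) then {{1}}
            else if (\<exists>x\<in>\<sigma>. snd x = Bot) then {{0}}
            else out_complex)"

text \<open>In a step, process i either receives one message (sender, payload)
  or the null message (None); it moves to a new local state and sends a finite list of
  messages (destination, payload). out i s = Some d means that the process has
  decided d in local state s; the decision of a process is the FIRST output it produces
  (decisions are irrevocable).\<close>
record ('b, 's, 'm) protocol =
  init   :: "nat \<Rightarrow> 'b \<times> inval \<Rightarrow> 's"
  trans  :: "nat \<Rightarrow> 's \<Rightarrow> (nat \<times> 'm) option \<Rightarrow> 's \<times> (nat \<times> 'm) list"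
  out :: "nat \<Rightarrow> 's \<Rightarrow> nat option"

text \<open>Messages in transit are uniquely tagged: (send step k, index j, sender, receiver, payload).\<close>
type_synonym 'm msg = "nat \<times> nat \<times> nat \<times> nat \<times> 'm"

definition msg_src :: "'m msg \<Rightarrow> nat" where "msg_src e = fst (snd (snd e))"
definition msg_dst :: "'m msg \<Rightarrow> nat" where "msg_dst e = fst (snd (snd (snd e)))"
definition msg_payload :: "'m msg \<Rightarrow> 'm" where "msg_payload e = snd (snd (snd (snd e)))"

type_synonym ('s, 'm) config = "(nat \<Rightarrow> 's) \<times> 'm msg set"

text \<open>An event: the stepping process and the message it receives (if any).\<close>
type_synonym 'm event = "nat \<times> 'm msg option"

definition step_config ::
  "('b, 's, 'm) protocol \<Rightarrow> nat \<Rightarrow> 'm event \<Rightarrow> ('s, 'm) config \<Rightarrow> ('s, 'm) config" where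
  "step_config P k ev c =
     (let p = fst ev; mo = snd ev;
          r = trans P p (fst c p) (map_option (\<lambda>e. (msg_src e, msg_payload e)) mo);
          outs = snd r
      in ((fst c)(p := fst r),
          (snd c - set_option mo) \<union>
            {(k, j, p, fst (outs ! j), snd (outs ! j)) | j. j < length outs}))"

definition is_run ::
  "('b, 's, 'm) protocol \<Rightarrow> nat \<Rightarrow> (nat \<Rightarrow> 'b) \<Rightarrow> (nat \<Rightarrow> inval)
     \<Rightarrow> (nat \<Rightarrow> 'm event) \<Rightarrow> (nat \<Rightarrow> ('s, 'm) config) \<Rightarrow> bool" where
  "is_run P n v a evs C \<longleftrightarrow>
     C 0 = (\<lambda>i. init P i (v i, a i), {}) \<and>
     (\<forall>k. fst (evs k) \<le> n \<and>
          (\<forall>e. snd (evs k) = Some e \<longrightarrow> e \<in> snd (C k) \<and> msg_dst e = fst (evs k)) \<and>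
          C (Suc k) = step_config P k (evs k) (C k))"

text \<open>Faulty (crashed) processes: those taking only finitely many steps.\<close>
definition faulty :: "nat \<Rightarrow> (nat \<Rightarrow> 'm event) \<Rightarrow> nat set" where
  "faulty n evs = {p. p \<le> n \<and> finite {k. fst (evs k) = p}}"

definition participating :: "nat \<Rightarrow> (nat \<Rightarrow> 'm event) \<Rightarrow> nat set" where
  "participating n evs = {p. p \<le> n \<and> (\<exists>k. fst (evs k) = p)}"

definition fair :: "nat \<Rightarrow> (nat \<Rightarrow> 'm event) \<Rightarrow> (nat \<Rightarrow> ('s, 'm) config) \<Rightarrow> bool" where
  "fair n evs C \<longleftrightarrow>
     (\<forall>k e. e \<in> snd (C k) \<and> msg_dst e \<le> n \<and> msg_dst e \<notin> faulty n evs
        \<longrightarrow> (\<exists>k'\<ge>k. snd (evs k') = Some e))"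

definition decides ::
  "('b, 's, 'm) protocol \<Rightarrow> (nat \<Rightarrow> ('s, 'm) config) \<Rightarrow> nat \<Rightarrow> nat \<Rightarrow> bool" where
  "decides P C p d \<longleftrightarrow>
     (\<exists>k. out P p (fst (C k) p) = Some d \<and> (\<forall>k'<k. out P p (fst (C k') p) = None))"

definition decided_values ::
  "('b, 's, 'm) protocol \<Rightarrow> nat \<Rightarrow> (nat \<Rightarrow> 'm event) \<Rightarrow> (nat \<Rightarrow> ('s, 'm) config) \<Rightarrow> nat set" where
  "decided_values P n evs C = {d. \<exists>p \<in> participating n evs. decides P C p d}"

definition input_simplex :: "nat \<Rightarrow> (nat \<Rightarrow> 'b) \<Rightarrow> (nat \<Rightarrow> inval) \<Rightarrow> (nat \<Rightarrow> 'm event) \<Rightarrow> ('b \<times> inval) set" where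
  "input_simplex n v a evs = {(v p, a p) | p. p \<in> participating n evs}"

definition t_resilient_solves ::
  "nat \<Rightarrow> nat \<Rightarrow> (nat \<Rightarrow> 'b) \<Rightarrow> ('b, 's, 'm) protocol \<Rightarrow> bool" where
  "t_resilient_solves n t v P \<longleftrightarrow>
     (\<forall>a evs C. is_run P n v a evs C \<and> fair n evs C \<and> card (faulty n evs) \<le> t \<longrightarrow>
        (\<forall>p. p \<le> n \<and> p \<notin> faulty n evs \<longrightarrow> (\<exists>d\<in>{0,1}. decides P C p d)) \<and>
        decided_values P n evs C \<in> Xi (input_simplex n v a evs))"

end

theory Submission
  imports Defs
begin

definition pick :: "nat \<Rightarrow> ('s, 'm) config \<Rightarrow> 'm msg option" where
  "pick p c = (if \<exists>e\<in>snd c. msg_dst e = p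
     then Some (ARG_MIN fst e. e \<in> snd c \<and> msg_dst e = p) else None)"

primrec gen :: "('b, 's, 'm) protocol \<Rightarrow> (nat \<Rightarrow> 's) \<Rightarrow> (nat \<Rightarrow> nat) \<Rightarrow> nat \<Rightarrow> ('s, 'm) config" where
  "gen P s0 sch 0 = (s0, {})"
| "gen P s0 sch (Suc k) = step_config P k (sch k, pick (sch k) (gen P s0 sch k)) (gen P s0 sch k)"

declare gen.simps(2)[simp del]

definition gevs :: "('b, 's, 'm) protocol \<Rightarrow> (nat \<Rightarrow> 's) \<Rightarrow> (nat \<Rightarrow> nat) \<Rightarrow> nat \<Rightarrow> 'm event" where
  "gevs P s0 sch k = (sch k, pick (sch k) (gen P s0 sch k))"

lemma pick_some:
  assumes "pick p c = Some e'"
  shows "e' \<in> snd c \<and> msg_dst e' = p"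
proof -
  from assms have ex: "\<exists>e\<in>snd c. msg_dst e = p" and e': "e' = (ARG_MIN fst e. e \<in> snd c \<and> msg_dst e = p)"
    unfolding pick_def by (auto split: if_splits)
  from ex obtain e where "e \<in> snd c \<and> msg_dst e = p" by blast
  then show ?thesis unfolding e' by (rule arg_min_nat_lemma[THEN conjunct1])
qed

lemma pick_min:
  assumes "e \<in> snd c" "msg_dst e = p"
  shows "\<exists>e'. pick p c = Some e' \<and> fst e' \<le> fst e"
proof -
  have "fst (ARG_MIN fst e. e \<in> snd c \<and> msg_dst e = p) \<le> fst e"
    by (rule arg_min_nat_le[where P="\<lambda>e. e \<in> snd c \<and> msg_dst e = p" and m=fst]) (use assms in auto)
  moreover have "pick p c = Some (ARG_MIN fst e. e \<in> snd c \<and> msg_dst e = p)"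
    using assms unfolding pick_def by auto
  ultimately show ?thesis by blast
qed

lemma step_snd_D:
  "e \<in> snd (step_config P k ev c) \<Longrightarrow> (e \<in> snd c \<and> snd ev \<noteq> Some e) \<or> fst e = k"
  unfolding step_config_def Let_def by auto

lemma step_snd_I:
  "e \<in> snd c \<Longrightarrow> snd ev \<noteq> Some e \<Longrightarrow> e \<in> snd (step_config P k ev c)"
  unfolding step_config_def Let_def by auto

lemma step_snd_finite:
  "finite (snd c) \<Longrightarrow> finite (snd (step_config P k ev c))"
  unfolding step_config_def Let_def by auto

lemma step_fst:
  "fst (step_config P k ev c) = (fst c)(fst ev := fst (trans P (fst ev) (fst c (fst ev))
      (map_option (\<lambda>e. (msg_src e, msg_payload e)) (snd ev))))"
  unfolding step_config_def Let_def by simp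

lemma step_snd_eq:
  "snd (step_config P k ev c) = (snd c - set_option (snd ev)) \<union>
     {(k, j, fst ev, fst (snd (trans P (fst ev) (fst c (fst ev)) (map_option (\<lambda>e. (msg_src e, msg_payload e)) (snd ev))) ! j),
          snd (snd (trans P (fst ev) (fst c (fst ev)) (map_option (\<lambda>e. (msg_src e, msg_payload e)) (snd ev))) ! j))
      | j. j < length (snd (trans P (fst ev) (fst c (fst ev)) (map_option (\<lambda>e. (msg_src e, msg_payload e)) (snd ev))))}"
  unfolding step_config_def Let_def by simp

context
  fixes P :: "('b, 's, 'm) protocol" and s0 :: "nat \<Rightarrow> 's" and sch :: "nat \<Rightarrow> nat"
begin

abbreviation "CC \<equiv> gen P s0 sch"
abbreviation "EE \<equiv> gevs P s0 sch"

lemma gen_Suc': "CC (Suc k) = step_config P k (EE k) (CC k)"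
  by (simp add: gevs_def gen.simps)

lemma gen_finite: "finite (snd (CC k))"
  by (induction k) (auto intro: step_snd_finite simp: gen_Suc')

lemma gen_tag: "e \<in> snd (CC k) \<Longrightarrow> fst e < k"
proof (induction k)
  case 0 then show ?case by simp
next
  case (Suc k)
  then show ?case using step_snd_D[of e P k "EE k" "CC k"] by (auto simp: gen_Suc')
qed

lemma gen_created: "e \<in> snd (CC k) \<Longrightarrow> e \<in> snd (CC (Suc (fst e)))"
proof (induction k)
  case 0 then show ?case by simp
next
  case (Suc k)
  from Suc.prems have "(e \<in> snd (CC k) \<and> snd (EE k) \<noteq> Some e) \<or> fst e = k"
    using step_snd_D by (metis gen_Suc')
  then show ?case using Suc by auto
qed

lemma gen_persist: "e \<in> snd (CC k) \<Longrightarrow> (\<forall>k'\<ge>k. snd (EE k') \<noteq> Some e) \<Longrightarrow> e \<in> snd (CC (k + m))"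
proof (induction m)
  case 0 then show ?case by simp
next
  case (Suc m)
  then show ?case using step_snd_I[of e "CC (k+m)" "EE (k+m)" P "k+m"] by (simp add: gen_Suc')
qed

lemma gen_absent: "e \<notin> snd (CC j) \<Longrightarrow> fst e < j \<Longrightarrow> e \<notin> snd (CC (j + m))"
proof (induction m)
  case 0 then show ?case by simp
next
  case (Suc m)
  then show ?case using step_snd_D[of e P "j+m" "EE (j+m)" "CC (j+m)"] by (auto simp: gen_Suc')
qed

lemma gen_ev: "snd (EE k) = Some e \<Longrightarrow> e \<in> snd (CC k) \<and> msg_dst e = fst (EE k)"
  unfolding gevs_def using pick_some by fastforce

lemma gen_no_return: "snd (EE k1) = Some e \<Longrightarrow> k1 < k2 \<Longrightarrow> e \<notin> snd (CC k2)"
proof -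
  assume d: "snd (EE k1) = Some e" and lt: "k1 < k2"
  have ein: "e \<in> snd (CC k1)" using gen_ev[OF d] by simp
  have ft: "fst e < k1" using gen_tag[OF ein] .
  have "e \<notin> snd (CC (Suc k1))"
    using step_snd_D[of e P k1 "EE k1" "CC k1"] d ft by (auto simp: gen_Suc')
  then have "e \<notin> snd (CC (Suc k1 + (k2 - Suc k1)))"
    using gen_absent[of e "Suc k1" "k2 - Suc k1"] ft by simp
  then show ?thesis using lt by simp
qed

lemma gen_fair:
  assumes bnd: "\<And>k. sch k \<le> n"
  shows "fair n EE CC"
  unfolding fair_def
proof (intro allI impI)
  fix k e
  assume a: "e \<in> snd (CC k) \<and> msg_dst e \<le> n \<and> msg_dst e \<notin> faulty n EE"
  define p where "p = msg_dst e"
  have inf: "infinite {k. fst (EE k) = p}" using a unfolding faulty_def p_def by auto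
  show "\<exists>k'\<ge>k. snd (EE k') = Some e"
  proof (rule ccontr)
    assume nd: "\<not> (\<exists>k'\<ge>k. snd (EE k') = Some e)"
    define D where "D = {k'. k \<le> k' \<and> fst (EE k') = p}"
    have "{k. fst (EE k) = p} \<subseteq> D \<union> {..<k}" unfolding D_def by auto
    then have infD: "infinite D" using inf finite_subset by blast
    define f where "f k' = the (snd (EE k'))" for k'
    have pers: "e \<in> snd (CC k')" if "k \<le> k'" for k'
      using gen_persist[of e k "k' - k"] a nd that by auto
    have fD: "snd (EE k') = Some (f k') \<and> fst (f k') \<le> fst e" if "k' \<in> D" for k'
    proof -
      from that have "k \<le> k'" "sch k' = p" unfolding D_def gevs_def by auto
      then obtain e' where "pick p (CC k') = Some e'" "fst e' \<le> fst e"
        using pick_min[of e "CC k'" p] pers[OF \<open>k \<le> k'\<close>] p_def by auto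
      then show ?thesis unfolding f_def gevs_def using \<open>sch k' = p\<close> by simp
    qed
    have inj: "inj_on f D"
    proof (rule inj_onI)
      fix x y assume xy: "x \<in> D" "y \<in> D" "f x = f y"
      show "x = y"
      proof (rule ccontr)
        assume "x \<noteq> y"
        then have "x < y \<or> y < x" by auto
        then show False
        proof
          assume "x < y"
          then have "f x \<notin> snd (CC y)" using gen_no_return fD xy(1) by blast
          moreover have "f y \<in> snd (CC y)" using gen_ev fD xy(2) by blast
          ultimately show False using xy(3) by simp
        next
          assume "y < x"
          then have "f y \<notin> snd (CC x)" using gen_no_return fD xy(2) by blast
          moreover have "f x \<in> snd (CC x)" using gen_ev fD xy(1) by blast
          ultimately show False using xy(3) by simp
        qed
      qed
    qed
    have sub: "f ` D \<subseteq> (\<Union>i\<le>fst e. snd (CC (Suc i)))"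
    proof
      fix x assume "x \<in> f ` D"
      then obtain k' where k': "k' \<in> D" "x = f k'" by blast
      then have "x \<in> snd (CC k')" "fst x \<le> fst e" using fD gen_ev by blast+
      then show "x \<in> (\<Union>i\<le>fst e. snd (CC (Suc i)))" using gen_created by blast
    qed
    have "finite (\<Union>i\<le>fst e. snd (CC (Suc i)))" using gen_finite by simp
    then have "finite (f ` D)" using sub finite_subset by blast
    then have "finite D" using inj finite_imageD by blast
    then show False using infD by simp
  qed
qed

lemma gen_run:
  assumes bnd: "\<And>k. sch k \<le> n" and s0: "s0 = (\<lambda>i. init P i (v i, a i))"
  shows "is_run P n v a EE CC"
  unfolding is_run_def
proof (intro conjI)
  show "CC 0 = (\<lambda>i. init P i (v i, a i), {})" using s0 by simp
next
  show "\<forall>k. fst (EE k) \<le> n \<and>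
          (\<forall>e. snd (EE k) = Some e \<longrightarrow> e \<in> snd (CC k) \<and> msg_dst e = fst (EE k)) \<and>
          CC (Suc k) = step_config P k (EE k) (CC k)"
  proof (rule allI)
  fix k
  have "fst (EE k) \<le> n" using bnd by (simp add: gevs_def)
  moreover have "\<forall>e. snd (EE k) = Some e \<longrightarrow> e \<in> snd (CC k) \<and> msg_dst e = fst (EE k)" using gen_ev by blast
  moreover have "CC (Suc k) = step_config P k (EE k) (CC k)" by (rule gen_Suc')
  ultimately show "fst (EE k) \<le> n \<and>
          (\<forall>e. snd (EE k) = Some e \<longrightarrow> e \<in> snd (CC k) \<and> msg_dst e = fst (EE k)) \<and>
          CC (Suc k) = step_config P k (EE k) (CC k)" by blast
  qed
qed

end


lemma gen_agree:
  assumes "\<forall>k<K. sch1 k = sch2 k \<and> sch1 k \<noteq> q" and "\<forall>i. i \<noteq> q \<longrightarrow> s1 i = s2 i"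
  shows "k \<le> K \<Longrightarrow> snd (gen P s1 sch1 k) = snd (gen P s2 sch2 k) \<and>
           (\<forall>i. i \<noteq> q \<longrightarrow> fst (gen P s1 sch1 k) i = fst (gen P s2 sch2 k) i)"
proof (induction k)
  case 0 then show ?case using assms by simp
next
  case (Suc k)
  then have IH: "snd (gen P s1 sch1 k) = snd (gen P s2 sch2 k)"
    "\<forall>i. i \<noteq> q \<longrightarrow> fst (gen P s1 sch1 k) i = fst (gen P s2 sch2 k) i" by auto
  have "k < K" using Suc.prems by simp
  then have sk: "sch1 k = sch2 k" "sch1 k \<noteq> q" using assms(1) by blast+
  have pk: "pick (sch1 k) (gen P s1 sch1 k) = pick (sch2 k) (gen P s2 sch2 k)"
    using IH(1) sk unfolding pick_def by simp
  have st: "fst (gen P s1 sch1 k) (sch1 k) = fst (gen P s2 sch2 k) (sch2 k)"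
    using IH(2) sk by simp
  show ?case
    unfolding gen.simps(2) step_fst step_snd_eq
    using IH pk st sk by (simp add: fun_upd_def)
qed

lemma unb_mod: "(n::nat) \<ge> 1 \<Longrightarrow> p < n \<Longrightarrow> infinite {k. K \<le> k \<and> k mod n = p}"
  unfolding finite_nat_set_iff_bounded_le
proof
  assume "n \<ge> 1" "p < n"
  assume "\<exists>m. \<forall>k\<in>{k. K \<le> k \<and> k mod n = p}. k \<le> m"
  then obtain m where m: "\<forall>k\<in>{k. K \<le> k \<and> k mod n = p}. k \<le> m" by blast
  define k where "k = p + n * (K + m + 1)"
  have "(K + m + 1) * 1 \<le> (K + m + 1) * n" by (rule mult_le_mono2) fact
  then have "k > m" "K \<le> k" unfolding k_def by (simp_all add: mult.commute)
  moreover have "k mod n = p mod n" unfolding k_def by (rule mod_mult_self2)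
  then have "k mod n = p" using \<open>p < n\<close> by simp
  ultimately show False using m by force
qed

theorem lemma2:
  fixes n t :: nat and v :: "nat \<Rightarrow> 'b" and P :: "('b, 's, 'm) protocol"
  assumes "n \<ge> 1" and "1 \<le> t" and "2 * t < n + 1" and "inj_on v {0..n}"
  shows "\<not> t_resilient_solves n t v P"
proof
  assume sol: "t_resilient_solves n t v P"
  define a1 where "a1 = (\<lambda>_::nat. One)"
  define sch1 where "sch1 k = k mod n" for k
  define s1 where "s1 = (\<lambda>i. init P i (v i, a1 i))"
  define C1 where "C1 = gen P s1 sch1"
  define E1 where "E1 = gevs P s1 sch1"
  have b1: "sch1 k \<le> n" for k unfolding sch1_def using \<open>n \<ge> 1\<close>
    by (meson less_imp_le_nat less_le_trans mod_less_divisor zero_less_one)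
  have run1: "is_run P n v a1 E1 C1" unfolding C1_def E1_def using gen_run[OF b1 s1_def] .
  have fair1: "fair n E1 C1" unfolding C1_def E1_def using gen_fair[OF b1] .
  have f1: "faulty n E1 \<subseteq> {n}"
  proof
    fix p assume "p \<in> faulty n E1"
    then have "p \<le> n" "finite {k. fst (E1 k) = p}" unfolding faulty_def by auto
    moreover have "p < n \<Longrightarrow> infinite {k. fst (E1 k) = p}"
      using unb_mod[OF \<open>n \<ge> 1\<close>, of p 0] unfolding E1_def gevs_def sch1_def by simp
    ultimately show "p \<in> {n}" by fastforce
  qed
  have "card (faulty n E1) \<le> card {n}" using f1 by (intro card_mono) auto
  then have c1: "card (faulty n E1) \<le> t" using \<open>1 \<le> t\<close> by simp
  have R1: "(\<forall>p. p \<le> n \<and> p \<notin> faulty n E1 \<longrightarrow> (\<exists>d\<in>{0,1}. decides P C1 p d)) \<and>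
        decided_values P n E1 C1 \<in> Xi (input_simplex n v a1 E1)"
    using sol run1 fair1 c1 unfolding t_resilient_solves_def by blast
  have "0 \<notin> faulty n E1" using f1 \<open>n \<ge> 1\<close> by auto
  then obtain d where d: "decides P C1 0 d" using R1 by auto
  have part10: "0 \<in> participating n E1" unfolding participating_def E1_def gevs_def sch1_def by (auto intro!: exI[of _ 0])
  have "Xi (input_simplex n v a1 E1) = {{1}}"
    unfolding Xi_def input_simplex_def a1_def by auto
  then have dv1: "decided_values P n E1 C1 = {1}" using R1 by simp
  have "d \<in> decided_values P n E1 C1" using d part10 unfolding decided_values_def by blast
  then have "d = 1" using dv1 by simp
  with d obtain K where K: "out P 0 (fst (C1 K) 0) = Some 1" "\<forall>k'<K. out P 0 (fst (C1 k') 0) = None"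
    unfolding decides_def by blast
  define a2 where "a2 = (\<lambda>i::nat. if i = n then Bot else One)"
  define sch2 where "sch2 k = (if k < K then k mod n else k mod (n + 1))" for k
  define s2 where "s2 = (\<lambda>i. init P i (v i, a2 i))"
  define C2 where "C2 = gen P s2 sch2"
  define E2 where "E2 = gevs P s2 sch2"
  have b2: "sch2 k \<le> n" for k unfolding sch2_def using b1[of k] unfolding sch1_def
    by (simp add: less_Suc_eq_le)
  have run2: "is_run P n v a2 E2 C2" unfolding C2_def E2_def using gen_run[OF b2 s2_def] .
  have fair2: "fair n E2 C2" unfolding C2_def E2_def using gen_fair[OF b2] .
  have inf2: "infinite {k. fst (E2 k) = p}" if "p \<le> n" for p
  proof -
    have sub: "{k. K \<le> k \<and> k mod (n+1) = p} \<subseteq> {k. fst (E2 k) = p}"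
    proof
      fix k assume "k \<in> {k. K \<le> k \<and> k mod (n+1) = p}"
      then have "sch2 k = p" unfolding sch2_def by simp
      then show "k \<in> {k. fst (E2 k) = p}" by (simp add: E2_def gevs_def)
    qed
    have "infinite {k. K \<le> k \<and> k mod (n+1) = p}" by (rule unb_mod) (use that in auto)
    then show ?thesis using sub infinite_super by blast
  qed
  have f2: "faulty n E2 = {}" unfolding faulty_def using inf2 by auto
  have R2: "decided_values P n E2 C2 \<in> Xi (input_simplex n v a2 E2)"
    using sol run2 fair2 f2 unfolding t_resilient_solves_def by auto
  obtain kn where "fst (E2 kn) = n" using not_finite_existsD[OF inf2[of n]] by auto
  then have "n \<in> participating n E2" unfolding participating_def by auto
  then have "(v n, Bot) \<in> input_simplex n v a2 E2" unfolding input_simplex_def a2_def by force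
  then have "Xi (input_simplex n v a2 E2) = {{0}}" unfolding Xi_def by force
  then have dv2: "decided_values P n E2 C2 = {0}" using R2 by simp
  have ag: "k \<le> K \<Longrightarrow> fst (C1 k) 0 = fst (C2 k) 0" for k
  proof -
    assume "k \<le> K"
    have h1: "\<forall>k<K. sch1 k = sch2 k \<and> sch1 k \<noteq> n"
    proof (intro allI impI)
      fix k assume "k < K"
      have "k mod n < n" using \<open>n \<ge> 1\<close> by simp
      then show "sch1 k = sch2 k \<and> sch1 k \<noteq> n" unfolding sch1_def sch2_def using \<open>k < K\<close> by simp
    qed
    have h2: "\<forall>i. i \<noteq> n \<longrightarrow> s1 i = s2 i" unfolding s1_def s2_def a1_def a2_def by simp
    show ?thesis using gen_agree[OF h1 h2 \<open>k \<le> K\<close>, of P] \<open>n \<ge> 1\<close>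
      unfolding C1_def C2_def by auto
  qed
  have "decides P C2 0 1" unfolding decides_def
    using K ag by (intro exI[of _ K]) (auto simp: less_imp_le_nat)
  moreover have "0 \<in> participating n E2" unfolding participating_def E2_def gevs_def sch2_def by (auto intro!: exI[of _ 0])
  ultimately have "1 \<in> decided_values P n E2 C2" unfolding decided_values_def by blast
  then show False using dv2 by simp
qed

end
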